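(* Let $q\ge2$ and let $T$ be a connected, complete and deterministic transducer with input alphabet $\{0,\dots,q-1\}$, real output labels, an initial state, and a real final output at every state. For a nonnegative integer $n$, let $g(n)$ be the output sum of $T$ on input the $q$-ary expansion of $n$. Let $r$ be a nonnegative integer and suppose: (1) from every state, reading the input $0^r$ ($r$ zeros) leads to the initial state; (2) for every state $s$, the sum of the output labels along the path reading $0^r$ starting at $s$ equals the final output of $s$; (3) appending additional zeros at the end of the input sequence (i.e. after the most significant digit) does not change the output sum. Then $g$ is $q$-quasiadditive with parameter $r$, i.e. $g(q^{k+r}a+b)=g(a)+g(b)$ for all nonnegative integers $a,b,k$ with $0\le b<q^k$.
   Context: A transducer consists of a finite set of states, an initial state, the input alphabet $\{0,\dots,q-1\}$, an output alphabet which is a set of real numbers, transitions between states labelled $\varepsilon\mid\delta$ with $\varepsilon$ an input letter and $\delta$ an output letter, and a final output (a real number) for each state. It is complete and deterministic if for every state $s$ and input letter $\varepsilon$ there is exactly one transition leaving $s$ with input label $\varepsilon$. The transducer reads an input word (for an integer $n$: its $q$-ary expansion, starting from the least significant digit) along the unique path starting at the initial state with these input labels; the output sum is the sum of the output labels along this path plus the final output of the state where the path ends. Connected refers to the underlying graph of states and transitions. *)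

theory Defs
  imports Complex_Main
begin

text \<open>q-ary expansion of n, least significant digit first; the expansion of 0 is the
empty word. (Only meaningful for q >= 2; for q < 2 it is empty.)\<close>
function qdigits :: "nat \<Rightarrow> nat \<Rightarrow> nat list" where
  "qdigits q n = (if n = 0 \<or> q < 2 then [] else n mod q # qdigits q (n div q))"
  by auto
termination
  by (relation "measure snd") auto

text \<open>A complete deterministic transducer with state set S is given by a transition
function delta (next state) and an output function out (output label of the transition
leaving state s with input letter e), plus final outputs fin.\<close>

fun trun :: "('s \<Rightarrow> nat \<Rightarrow> 's) \<Rightarrow> 's \<Rightarrow> nat list \<Rightarrow> 's" where
  "trun delta s [] = s"
| "trun delta s (e # w) = trun delta (delta s e) w"

fun tpath_out :: "('s \<Rightarrow> nat \<Rightarrow> 's) \<Rightarrow> ('s \<Rightarrow> nat \<Rightarrow> real) \<Rightarrow> 's \<Rightarrow> nat list \<Rightarrow> real" where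
  "tpath_out delta out s [] = 0"
| "tpath_out delta out s (e # w) = out s e + tpath_out delta out (delta s e) w"

definition toutput_sum ::
  "('s \<Rightarrow> nat \<Rightarrow> 's) \<Rightarrow> ('s \<Rightarrow> nat \<Rightarrow> real) \<Rightarrow> ('s \<Rightarrow> real) \<Rightarrow> 's \<Rightarrow> nat list \<Rightarrow> real" where
  "toutput_sum delta out fin s w = tpath_out delta out s w + fin (trun delta s w)"

definition tconnected :: "nat \<Rightarrow> 's set \<Rightarrow> ('s \<Rightarrow> nat \<Rightarrow> 's) \<Rightarrow> bool" where
  "tconnected q S delta \<longleftrightarrow>
     (let E = {(s, delta s e) | s e. s \<in> S \<and> e < q} in
      \<forall>s\<in>S. \<forall>t\<in>S. (s, t) \<in> (E \<union> E\<inverse>)\<^sup>*)"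

definition q_quasiadditive :: "nat \<Rightarrow> nat \<Rightarrow> (nat \<Rightarrow> real) \<Rightarrow> bool" where
  "q_quasiadditive q r g \<longleftrightarrow>
     (\<forall>a b k. b < q ^ k \<longrightarrow> g (q ^ (k + r) * a + b) = g a + g b)"

end

theory Submission
  imports Defs
begin

fun pad :: "nat \<Rightarrow> nat \<Rightarrow> nat \<Rightarrow> nat list" where
  "pad q 0 b = []"
| "pad q (Suc k) b = b mod q # pad q k (b div q)"

lemma pad_zero: "pad q k 0 = replicate k 0"
  by (induction k) auto

lemma pad_digits: "q \<ge> 2 \<Longrightarrow> set (pad q k b) \<subseteq> {..<q}"
  by (induction k arbitrary: b) auto

lemma qdigits_digits: "q \<ge> 2 \<Longrightarrow> set (qdigits q b) \<subseteq> {..<q}"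
proof (induction b rule: less_induct)
  case (less b)
  show ?case
  proof (cases "b = 0")
    case True then show ?thesis by simp
  next
    case False
    then have "b div q < b" using less.prems by simp
    with less show ?thesis using False by (subst qdigits.simps) auto
  qed
qed

lemma pad_add: "q \<ge> 2 \<Longrightarrow> pad q (k + r) b = pad q k b @ pad q r (b div q ^ k)"
  by (induction k arbitrary: b) (auto simp: div_mult2_eq mult.commute)

lemma pad_qdigits: "q \<ge> 2 \<Longrightarrow> b < q ^ k \<Longrightarrow> \<exists>m. pad q k b = qdigits q b @ replicate m 0"
proof (induction k arbitrary: b)
  case 0 then show ?case by simp
next
  case (Suc k)
  show ?case
  proof (cases "b = 0")
    case True then show ?thesis using Suc.prems by (auto simp: pad_zero simp del: pad.simps replicate.simps)
  next
    case False
    have "b div q < q ^ k" using Suc.prems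
      by (simp add: less_mult_imp_div_less mult.commute)
    then obtain m where "pad q k (b div q) = qdigits q (b div q) @ replicate m 0"
      using Suc by blast
    then show ?thesis using False Suc.prems by (subst qdigits.simps) auto
  qed
qed

lemma qdigits_split: "q \<ge> 2 \<Longrightarrow> c > 0 \<Longrightarrow> b < q ^ k \<Longrightarrow>
   qdigits q (q ^ k * c + b) = pad q k b @ qdigits q c"
proof (induction k arbitrary: b)
  case 0 then show ?case by simp
next
  case (Suc k)
  have pos: "q ^ Suc k * c + b \<noteq> 0" using Suc.prems by simp
  have m: "(q ^ Suc k * c + b) mod q = b mod q" by (simp add: mult.assoc)
  have d: "(q ^ Suc k * c + b) div q = q ^ k * c + b div q" using Suc.prems by (simp add: mult.assoc)
  have "b div q < q ^ k" using Suc.prems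
    by (simp add: less_mult_imp_div_less mult.commute)
  then have "qdigits q (q ^ k * c + b div q) = pad q k (b div q) @ qdigits q c"
    using Suc by blast
  then show ?case using pos m d Suc.prems by (subst qdigits.simps) auto
qed

lemma tpath_append: "tpath_out delta out s (u @ v) = tpath_out delta out s u + tpath_out delta out (trun delta s u) v"
  by (induction u arbitrary: s) auto

lemma trun_append: "trun delta s (u @ v) = trun delta (trun delta s u) v"
  by (induction u arbitrary: s) auto

lemma trun_in: "\<forall>s\<in>S. \<forall>e<q. delta s e \<in> S \<Longrightarrow> s \<in> S \<Longrightarrow> set w \<subseteq> {..<q} \<Longrightarrow> trun delta s w \<in> S"
  by (induction w arbitrary: s) auto

theorem proposition10:
  fixes q r :: nat and S :: "'s set" and s0 :: 's
    and delta :: "'s \<Rightarrow> nat \<Rightarrow> 's" and out :: "'s \<Rightarrow> nat \<Rightarrow> real" and fin :: "'s \<Rightarrow> real"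
  assumes q: "q \<ge> 2"
    and finS: "finite S"
    and init: "s0 \<in> S"
    and trans: "\<forall>s\<in>S. \<forall>e<q. delta s e \<in> S"
    and conn: "tconnected q S delta"
    and zeros_init: "\<forall>s\<in>S. trun delta s (replicate r 0) = s0"
    and zeros_out: "\<forall>s\<in>S. tpath_out delta out s (replicate r 0) = fin s"
    and append_zeros: "\<forall>w m. set w \<subseteq> {..<q} \<longrightarrow>
        toutput_sum delta out fin s0 (w @ replicate m 0) = toutput_sum delta out fin s0 w"
  shows "q_quasiadditive q r (\<lambda>n. toutput_sum delta out fin s0 (qdigits q n))"
proof -
  let ?T = "toutput_sum delta out fin s0"
  have "?T ([] @ replicate r 0) = ?T []" using append_zeros[rule_format, of "[]" r] by simp
  then have fin0: "fin s0 = 0" using zeros_out zeros_init init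
    by (simp add: toutput_sum_def)
  have g0: "?T (qdigits q 0) = 0" using fin0 by (simp add: toutput_sum_def)
  have padT: "?T (pad q k b) = ?T (qdigits q b)" if bq: "b < q ^ k" for k b
  proof -
    obtain m where "pad q k b = qdigits q b @ replicate m 0" using pad_qdigits[OF q bq] by blast
    then show ?thesis using append_zeros qdigits_digits[OF q] by simp
  qed
  show ?thesis unfolding q_quasiadditive_def
  proof (intro allI impI)
    fix a b k assume b: "b < q ^ k"
    show "?T (qdigits q (q ^ (k + r) * a + b)) = ?T (qdigits q a) + ?T (qdigits q b)"
    proof (cases "a = 0")
      case True then show ?thesis using g0 by simp
    next
      case False
      have bk: "b < q ^ (k + r)" using b q
        by (meson le_add1 less_le_trans one_le_numeral order_trans power_increasing)
      have bd: "b div q ^ k = 0" using b by simp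
      define w where "w = pad q k b"
      have eq: "qdigits q (q ^ (k + r) * a + b) = w @ replicate r 0 @ qdigits q a"
        using qdigits_split[OF q _ bk, of a] False pad_add[OF q, of k r b] bd
        by (simp add: w_def pad_zero)
      define t where "t = trun delta s0 w"
      have tS: "t \<in> S" unfolding t_def w_def using trun_in[OF trans init pad_digits[OF q]] .
      have "?T (w @ replicate r 0 @ qdigits q a)
          = tpath_out delta out s0 w + fin t + ?T (qdigits q a)"
        using tS zeros_init zeros_out
        by (simp add: toutput_sum_def tpath_append trun_append t_def)
      also have "tpath_out delta out s0 w + fin t = ?T w"
        by (simp add: toutput_sum_def t_def)
      also have "?T w = ?T (qdigits q b)" using padT[OF b] w_def by simp
      finally show ?thesis using eq by simp
    qed
  qed
qed

end
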